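(* Let $(T,X)$ be a thickly stable flow, where $T$ is an abelian Hausdorff topological group and $X$ a Hausdorff uniform space. If $x\in X$ is an a.p. point, then the subflow $(T,\overline{Tx})$ is an a.p. flow even when $T$ is regarded as a discrete group (i.e. for every $\varepsilon\in\mathscr U_X$ there is a set $A\subseteq T$ and a finite set $F\subseteq T$ with $FA=T$ such that $Ay\subseteq\varepsilon[y]$ for all $y\in\overline{Tx}$), and moreover $(T,\overline{Tx})$ is equicontinuous.
   Context: $\mathscr U_X$ is a compatible symmetric uniformity of $X$; for $\varepsilon\in\mathscr U_X$ and $A\subseteq X$, $\varepsilon[A]=\{y:\exists a\in A,\ (a,y)\in\varepsilon\}$. A set $S\subseteq T$ is (right) thick if for every compact $K\subseteq T$ there is $t\in T$ with $Kt\subseteq S$; $A\subseteq T$ is (right) syndetic if there is a compact $K\subseteq T$ with $Kt\cap A\neq\emptyset$ for all $t\in T$. A point $x$ is almost periodic (a.p.) if $\{t: tx\in U\}$ is syndetic for every neighborhood $U$ of $x$. A flow $(T,X)$ is thickly stable if for every $\varepsilon\in\mathscr U_X$ and every $x\in X$ there exist $\delta\in\mathscr U_X$ and a thick $S\subseteq T$ such that $s(\delta[x])\subseteq\varepsilon[sx]$ for all $s\in S$. A flow is an a.p. flow if for every $\alpha\in\mathscr U_X$ there is a syndetic $A\subseteq T$ with $Ax\subseteq\alpha[x]$ for all $x\in X$. A flow $(T,Z)$ is equicontinuous if for every $\varepsilon\in\mathscr U$ and $z\in Z$ there is $\delta$ with $t(\delta[z])\subseteq\varepsilon[tz]$ for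 all $t\in T$. *)

theory Defs
  imports "HOL-Analysis.Analysis"
begin

text \<open>Entourages of the (compatible, symmetric) uniformity of X: the symmetric members
  of the uniformity filter (they form a base of the uniformity).\<close>
definition entourage :: "('b::uniform_space \<times> 'b) set \<Rightarrow> bool" where
  "entourage E \<longleftrightarrow> eventually (\<lambda>p. p \<in> E) uniformity \<and> sym E"

definition ent_img :: "('b \<times> 'b) set \<Rightarrow> 'b set \<Rightarrow> 'b set" where
  "ent_img E A = {y. \<exists>a\<in>A. (a, y) \<in> E}"

definition flow :: "('a::topological_ab_group_add \<Rightarrow> 'b::topological_space \<Rightarrow> 'b) \<Rightarrow> bool" where
  "flow act \<longleftrightarrow> continuous_on UNIV (\<lambda>(t, x). act t x)
     \<and> (\<forall>x. act 0 x = x) \<and> (\<forall>s t x. act (s + t) x = act s (act t x))"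

definition thick :: "'a::topological_ab_group_add set \<Rightarrow> bool" where
  "thick S \<longleftrightarrow> (\<forall>K. compact K \<longrightarrow> (\<exists>t. (\<lambda>k. k + t) ` K \<subseteq> S))"

definition syndetic :: "'a::topological_ab_group_add set \<Rightarrow> bool" where
  "syndetic A \<longleftrightarrow> (\<exists>K. compact K \<and> (\<forall>t. (\<lambda>k. k + t) ` K \<inter> A \<noteq> {}))"

definition ap_point :: "('a::topological_ab_group_add \<Rightarrow> 'b::topological_space \<Rightarrow> 'b) \<Rightarrow> 'b \<Rightarrow> bool" where
  "ap_point act x \<longleftrightarrow> (\<forall>U. open U \<and> x \<in> U \<longrightarrow> syndetic {t. act t x \<in> U})"

definition thickly_stable :: "('a::topological_ab_group_add \<Rightarrow> 'b::uniform_space \<Rightarrow> 'b) \<Rightarrow> bool" where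
  "thickly_stable act \<longleftrightarrow> (\<forall>\<epsilon> x. entourage \<epsilon> \<longrightarrow>
     (\<exists>\<delta> S. entourage \<delta> \<and> thick S \<and>
        (\<forall>s\<in>S. act s ` ent_img \<delta> {x} \<subseteq> ent_img \<epsilon> {act s x})))"

text \<open>The subflow on the invariant set Y is an a.p. flow when T is regarded as discrete:
  syndetic sets w.r.t. finite K, i.e. F + A = T with F finite.\<close>
definition discrete_ap_on :: "('a::ab_group_add \<Rightarrow> 'b::uniform_space \<Rightarrow> 'b) \<Rightarrow> 'b set \<Rightarrow> bool" where
  "discrete_ap_on act Y \<longleftrightarrow> (\<forall>\<epsilon>. entourage \<epsilon> \<longrightarrow>
     (\<exists>A F. finite F \<and> {f + a | f a. f \<in> F \<and> a \<in> A} = UNIV \<and>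
        (\<forall>y\<in>Y. \<forall>a\<in>A. act a y \<in> ent_img \<epsilon> {y})))"

definition equicontinuous_on :: "('a \<Rightarrow> 'b::uniform_space \<Rightarrow> 'b) \<Rightarrow> 'b set \<Rightarrow> bool" where
  "equicontinuous_on act Y \<longleftrightarrow> (\<forall>\<epsilon> z. entourage \<epsilon> \<and> z \<in> Y \<longrightarrow>
     (\<exists>\<delta>. entourage \<delta> \<and> (\<forall>t. act t ` (ent_img \<delta> {z} \<inter> Y) \<subseteq> ent_img \<epsilon> {act t z})))"

end

theory Submission
  imports Defs
begin

lemma ent_refl: "entourage E \<Longrightarrow> (x,x) \<in> E"
  unfolding entourage_def using uniformity_refl[of "\<lambda>p. p \<in> E"] by auto

lemma ent_sym: "entourage E \<Longrightarrow> (x,y) \<in> E \<Longrightarrow> (y,x) \<in> E"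
  unfolding entourage_def by (auto simp: sym_def)

lemma ent_of_ev:
  assumes "eventually P uniformity"
  shows "\<exists>E. entourage E \<and> (\<forall>p\<in>E. P p)"
proof -
  have "eventually (\<lambda>p. P (snd p, fst p)) uniformity"
    using uniformity_sym[OF assms] by (simp add: case_prod_unfold)
  then have "eventually (\<lambda>p. P p \<and> P (snd p, fst p)) uniformity"
    using assms by (simp add: eventually_conj_iff)
  then show ?thesis
    by (intro exI[of _ "{p. P p \<and> P (snd p, fst p)}"]) (auto simp: entourage_def sym_def)
qed

lemma ent_ev: "entourage E \<Longrightarrow> eventually (\<lambda>p. p \<in> E) uniformity"
  unfolding entourage_def by auto

lemma ent_split:
  assumes "entourage E"
  shows "\<exists>D. entourage D \<and> (\<forall>a b c. (a,b) \<in> D \<longrightarrow> (b,c) \<in> D \<longrightarrow> (a,c) \<in> E)"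
proof -
  obtain D0 where D0: "eventually D0 uniformity" "\<And>a b c. D0 (a,b) \<Longrightarrow> D0 (b,c) \<Longrightarrow> (a,c) \<in> E"
    using uniformity_transE[OF ent_ev[OF assms]] by metis
  obtain D where "entourage D" "\<forall>p\<in>D. D0 p" using ent_of_ev[OF D0(1)] by blast
  then show ?thesis using D0(2) by blast
qed

lemma ent_split3:
  assumes "entourage E"
  shows "\<exists>D. entourage D \<and> (\<forall>a b c d. (a,b) \<in> D \<longrightarrow> (b,c) \<in> D \<longrightarrow> (c,d) \<in> D \<longrightarrow> (a,d) \<in> E)"
proof -
  obtain D1 where D1: "entourage D1" "\<forall>a b c. (a,b) \<in> D1 \<longrightarrow> (b,c) \<in> D1 \<longrightarrow> (a,c) \<in> E"
    using ent_split[OF assms] by blast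
  obtain D where D: "entourage D" "\<forall>a b c. (a,b) \<in> D \<longrightarrow> (b,c) \<in> D \<longrightarrow> (a,c) \<in> D1"
    using ent_split[OF D1(1)] by blast
  have "(a,d) \<in> E" if "(a,b) \<in> D" "(b,c) \<in> D" "(c,d) \<in> D" for a b c d
  proof -
    have "(c,d) \<in> D1" using D that(3) ent_refl[OF D(1)] by blast
    then show ?thesis using D D1 that by blast
  qed
  then show ?thesis using D(1) by blast
qed

lemma ent_nhd:
  assumes "entourage E"
  shows "\<exists>V. open V \<and> y \<in> V \<and> (\<forall>z\<in>V. (y,z) \<in> E)"
proof -
  have "eventually (\<lambda>z. (y,z) \<in> E) (nhds y)"
    unfolding eventually_nhds_uniformity using ent_ev[OF assms]
    by (auto elim: eventually_mono)
  then show ?thesis unfolding eventually_nhds by blast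
qed

lemma nhd_ent:
  assumes "open V" "y \<in> V"
  shows "\<exists>E. entourage E \<and> (\<forall>z. (y,z) \<in> E \<longrightarrow> z \<in> V)"
proof -
  have "eventually (\<lambda>z. z \<in> V) (nhds y)" using assms eventually_nhds by blast
  then have "eventually (\<lambda>(x', z). x' = y \<longrightarrow> z \<in> V) uniformity"
    unfolding eventually_nhds_uniformity .
  from ent_of_ev[OF this] show ?thesis by auto
qed

lemma flow_add: "flow act \<Longrightarrow> act (s+t) x = act s (act t x)"
  unfolding flow_def by auto

lemma flow_zero: "flow act \<Longrightarrow> act 0 x = x"
  unfolding flow_def by auto

lemma flow_cont2:
  assumes "flow act" "open V" "act t y \<in> V"
  shows "\<exists>A B. open A \<and> open B \<and> t \<in> A \<and> y \<in> B \<and> (\<forall>s\<in>A. \<forall>z\<in>B. act s z \<in> V)"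
proof -
  have "open ((\<lambda>(t, x). act t x) -` V \<inter> UNIV)"
    using assms(1,2) unfolding flow_def using continuous_on_open_vimage[OF open_UNIV] by blast
  then have "open {p. act (fst p) (snd p) \<in> V}" by (simp add: vimage_def case_prod_beta)
  from open_prod_elim[OF this, of "(t,y)"] assms(3) show ?thesis
    by (smt (verit, ccfv_SIG) mem_Collect_eq mem_Sigma_iff subset_iff prod.sel)
qed

lemma flow_cont1:
  assumes "flow act" "open V" "act t y \<in> V"
  shows "\<exists>B. open B \<and> y \<in> B \<and> (\<forall>z\<in>B. act t z \<in> V)"
  using flow_cont2[OF assms] by blast

lemma flow_cont_ent:
  assumes "flow act" "entourage E"
  shows "\<exists>D. entourage D \<and> (\<forall>z. (y,z) \<in> D \<longrightarrow> (act t y, act t z) \<in> E)"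
proof -
  obtain V where V: "open V" "act t y \<in> V" "\<forall>z\<in>V. (act t y, z) \<in> E" using ent_nhd[OF assms(2)] by blast
  obtain B where B: "open B" "y \<in> B" "\<forall>z\<in>B. act t z \<in> V" using flow_cont1[OF assms(1) V(1,2)] by blast
  obtain D where "entourage D" "\<forall>z. (y,z) \<in> D \<longrightarrow> z \<in> B" using nhd_ent[OF B(1,2)] by blast
  then show ?thesis using B V by blast
qed

lemma closure_range_pick:
  assumes "y \<in> closure (range f)" "entourage E"
  shows "\<exists>t. (y, f t) \<in> E"
proof -
  obtain V where V: "open V" "y \<in> V" "\<forall>z\<in>V. (y,z) \<in> E" using ent_nhd[OF assms(2)] by blast
  then have "range f \<inter> V \<noteq> {}" using assms(1) closure_iff_nhds_not_empty by blast
  then show ?thesis using V by blast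
qed


lemma ent_inter: "entourage D \<Longrightarrow> entourage E \<Longrightarrow> entourage (D \<inter> E)"
  unfolding entourage_def by (auto simp: eventually_conj_iff sym_def)

lemma syndetic_thick:
  fixes N S :: "'a::topological_ab_group_add set"
  assumes "syndetic N" "thick S"
  shows "\<exists>r\<in>N. t0 - r \<in> S"
proof -
  obtain K where K: "compact K" "\<forall>t. (\<lambda>k. k + t) ` K \<inter> N \<noteq> {}"
    using assms(1) unfolding syndetic_def by blast
  have "compact (uminus ` K)"
    by (rule compact_continuous_image[OF _ K(1)]) (intro continuous_intros)
  then obtain u where u: "(\<lambda>k. k + u) ` (uminus ` K) \<subseteq> S" using assms(2) unfolding thick_def by blast
  obtain k where k: "k \<in> K" "k + (t0 - u) \<in> N" using K(2)[rule_format, of "t0 - u"] by blast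
  have "t0 - (k + (t0 - u)) = - k + u" by (simp add: algebra_simps)
  also have "\<dots> \<in> S" using u k(1) by blast
  finally show ?thesis using k(2) by blast
qed

context
  fixes act :: "'a::{topological_ab_group_add, t2_space} \<Rightarrow> 'b::{uniform_space, t2_space} \<Rightarrow> 'b"
    and x :: 'b
  assumes fl: "flow act"
    and ts: "thickly_stable act"
    and ap: "ap_point act x"
begin

lemma stepE:
  assumes "entourage (\<epsilon>::('b\<times>'b) set)"
  shows "\<exists>\<delta>. entourage \<delta> \<and> (\<forall>\<tau>1 \<tau>2 t. (x, act \<tau>1 x) \<in> \<delta> \<longrightarrow> (x, act \<tau>2 x) \<in> \<delta> \<longrightarrow>
            (act t (act \<tau>1 x), act t (act \<tau>2 x)) \<in> \<epsilon>)"
proof -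
  obtain \<epsilon>1 where e1: "entourage \<epsilon>1" "\<forall>a b c. (a,b) \<in> \<epsilon>1 \<longrightarrow> (b,c) \<in> \<epsilon>1 \<longrightarrow> (a,c) \<in> \<epsilon>"
    using ent_split[OF assms] by blast
  obtain \<delta>1 S where d1: "entourage \<delta>1" "thick S"
    "\<forall>s\<in>S. act s ` ent_img \<delta>1 {x} \<subseteq> ent_img \<epsilon>1 {act s x}"
    using ts[unfolded thickly_stable_def, rule_format, OF e1(1), of x] by (elim exE conjE)
  obtain \<delta> where d: "entourage \<delta>" "\<forall>a b c. (a,b) \<in> \<delta> \<longrightarrow> (b,c) \<in> \<delta> \<longrightarrow> (a,c) \<in> \<delta>1"
    using ent_split[OF d1(1)] by blast
  have "(act t (act \<tau>1 x), act t (act \<tau>2 x)) \<in> \<epsilon>"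
    if h: "(x, act \<tau>1 x) \<in> \<delta>" "(x, act \<tau>2 x) \<in> \<delta>" for \<tau>1 \<tau>2 t
  proof -
    obtain D1 where D1: "entourage D1" "\<forall>z. (x,z) \<in> D1 \<longrightarrow> (act \<tau>1 x, act \<tau>1 z) \<in> \<delta>"
      using flow_cont_ent[OF fl d(1)] by blast
    obtain D2 where D2: "entourage D2" "\<forall>z. (x,z) \<in> D2 \<longrightarrow> (act \<tau>2 x, act \<tau>2 z) \<in> \<delta>"
      using flow_cont_ent[OF fl d(1)] by blast
    obtain U where U: "open U" "x \<in> U" "\<forall>z\<in>U. (x,z) \<in> D1 \<inter> D2"
      using ent_nhd[OF ent_inter[OF D1(1) D2(1)]] by blast
    have sy: "syndetic {r. act r x \<in> U}"
      using ap[unfolded ap_point_def, rule_format, OF conjI[OF U(1) U(2)]] .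
    obtain r where r0: "r \<in> {r. act r x \<in> U}" "t - r \<in> S"
      using syndetic_thick[OF sy d1(2), of t] by (elim bexE)
    then have r: "act r x \<in> U" "t - r \<in> S" by auto
    have g: "(act (t - r) x, act t (act \<tau> x)) \<in> \<epsilon>1"
      if g1: "(x, act \<tau> x) \<in> \<delta>" and g2: "(act \<tau> x, act \<tau> (act r x)) \<in> \<delta>" for \<tau>
    proof -
      have "(x, act \<tau> (act r x)) \<in> \<delta>1" using d(2)[rule_format, OF g1 g2] .
      then have "act (t - r) (act \<tau> (act r x)) \<in> act (t - r) ` ent_img \<delta>1 {x}"
        unfolding ent_img_def by auto
      then have "act (t - r) (act \<tau> (act r x)) \<in> ent_img \<epsilon>1 {act (t - r) x}"
        using d1(3)[rule_format, OF r(2)] by (rule subsetD[rotated])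
      moreover have "act (t - r) (act \<tau> (act r x)) = act t (act \<tau> x)"
      proof -
        have e: "t - r + (\<tau> + r) = t + \<tau>" by (simp add: algebra_simps)
        show ?thesis using flow_add[OF fl, of "t-r" "\<tau>+r" x] flow_add[OF fl, of \<tau> r x]
            flow_add[OF fl, of t \<tau> x] e by simp
      qed
      ultimately show ?thesis unfolding ent_img_def by simp
    qed
    have rD: "(x, act r x) \<in> D1" "(x, act r x) \<in> D2" using U(3) r(1) by auto
    have 1: "(act (t - r) x, act t (act \<tau>1 x)) \<in> \<epsilon>1"
      using g[OF h(1) D1(2)[rule_format, OF rD(1)]] .
    have 2: "(act (t - r) x, act t (act \<tau>2 x)) \<in> \<epsilon>1"
      using g[OF h(2) D2(2)[rule_format, OF rD(2)]] .
    show ?thesis using e1(2)[rule_format, OF ent_sym[OF e1(1) 1] 2] .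
  qed
  then show ?thesis using d(1) by (intro exI[of _ \<delta>] conjI allI impI) auto
qed

abbreviation "Y \<equiv> closure (range (\<lambda>t. act t x))"

lemma x_in_Y: "act t x \<in> Y"
  by (rule subsetD[OF closure_subset]) simp

lemma step2:
  assumes "entourage (\<epsilon>::('b\<times>'b) set)"
  shows "\<exists>\<delta>. entourage \<delta> \<and> (\<forall>y1\<in>Y. \<forall>y2\<in>Y. (x,y1) \<in> \<delta> \<longrightarrow> (x,y2) \<in> \<delta> \<longrightarrow>
            (\<forall>t. (act t y1, act t y2) \<in> \<epsilon>))"
proof -
  obtain \<epsilon>2 where e2: "entourage \<epsilon>2"
    "\<forall>a b c d. (a,b) \<in> \<epsilon>2 \<longrightarrow> (b,c) \<in> \<epsilon>2 \<longrightarrow> (c,d) \<in> \<epsilon>2 \<longrightarrow> (a,d) \<in> \<epsilon>"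
    using ent_split3[OF assms] by blast
  obtain \<delta>0 where d0: "entourage \<delta>0" "\<forall>\<tau>1 \<tau>2 t. (x, act \<tau>1 x) \<in> \<delta>0 \<longrightarrow> (x, act \<tau>2 x) \<in> \<delta>0 \<longrightarrow>
            (act t (act \<tau>1 x), act t (act \<tau>2 x)) \<in> \<epsilon>2"
    using stepE[OF e2(1)] by blast
  obtain \<delta> where d: "entourage \<delta>" "\<forall>a b c. (a,b) \<in> \<delta> \<longrightarrow> (b,c) \<in> \<delta> \<longrightarrow> (a,c) \<in> \<delta>0"
    using ent_split[OF d0(1)] by blast
  have pick: "\<exists>\<tau>. (x, act \<tau> x) \<in> \<delta>0 \<and> (act t y, act t (act \<tau> x)) \<in> \<epsilon>2"
    if yh: "y \<in> Y" "(x,y) \<in> \<delta>" for y t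
  proof -
    obtain D where D: "entourage D" "\<forall>z. (y,z) \<in> D \<longrightarrow> (act t y, act t z) \<in> \<epsilon>2"
      using flow_cont_ent[OF fl e2(1)] by blast
    obtain \<tau> where "(y, act \<tau> x) \<in> D \<inter> \<delta>"
      using closure_range_pick[OF yh(1) ent_inter[OF D(1) d(1)]] by blast
    then show ?thesis using D d yh by blast
  qed
  have "(act t y1, act t y2) \<in> \<epsilon>"
    if yy: "y1 \<in> Y" "y2 \<in> Y" "(x,y1) \<in> \<delta>" "(x,y2) \<in> \<delta>" for y1 y2 t
  proof -
    obtain \<tau>1 where t1: "(x, act \<tau>1 x) \<in> \<delta>0" "(act t y1, act t (act \<tau>1 x)) \<in> \<epsilon>2"
      using pick yy by blast
    obtain \<tau>2 where t2: "(x, act \<tau>2 x) \<in> \<delta>0" "(act t y2, act t (act \<tau>2 x)) \<in> \<epsilon>2"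
      using pick yy by blast
    have "(act t (act \<tau>1 x), act t (act \<tau>2 x)) \<in> \<epsilon>2" using d0(2) t1 t2 by blast
    then show ?thesis using e2(2) t1(2) ent_sym[OF e2(1) t2(2)] by meson
  qed
  then show ?thesis using d(1) by blast
qed

lemma Y_inv:
  assumes "y \<in> Y"
  shows "act \<sigma> y \<in> Y"
  unfolding closure_iff_nhds_not_empty
proof (intro allI impI)
  fix A V assume h: "V \<subseteq> A" "open V" "act \<sigma> y \<in> V"
  obtain B where B: "open B" "y \<in> B" "\<forall>z\<in>B. act \<sigma> z \<in> V" using flow_cont1[OF fl h(2,3)] by blast
  then obtain \<tau> where "act \<tau> x \<in> B" using assms unfolding closure_iff_nhds_not_empty by blast
  then have "act (\<sigma> + \<tau>) x \<in> V" using B flow_add[OF fl] by metis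
  then show "range (\<lambda>t. act t x) \<inter> A \<noteq> {}" using h by blast
qed

lemma minimal:
  assumes "y \<in> Y" "entourage (E::('b\<times>'b) set)"
  shows "\<exists>\<sigma>. (x, act \<sigma> y) \<in> E"
proof -
  obtain E1 where e1: "entourage E1"
    "\<forall>a b c d. (a,b) \<in> E1 \<longrightarrow> (b,c) \<in> E1 \<longrightarrow> (c,d) \<in> E1 \<longrightarrow> (a,d) \<in> E"
    using ent_split3[OF assms(2)] by blast
  obtain U where U: "open U" "x \<in> U" "\<forall>z\<in>U. (x,z) \<in> E1" using ent_nhd[OF e1(1)] by blast
  have "syndetic {r. act r x \<in> U}" using ap U unfolding ap_point_def by blast
  then obtain K where K: "compact K" "\<forall>t. (\<lambda>k. k + t) ` K \<inter> {r. act r x \<in> U} \<noteq> {}"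
    unfolding syndetic_def by blast
  have "\<forall>k. \<exists>A B. open A \<and> open B \<and> k \<in> A \<and> y \<in> B \<and> (\<forall>s\<in>A. \<forall>z\<in>B. (act k y, act s z) \<in> E1)"
  proof
    fix k
    obtain V where V: "open V" "act k y \<in> V" "\<forall>z\<in>V. (act k y, z) \<in> E1" using ent_nhd[OF e1(1)] by blast
    show "\<exists>A B. open A \<and> open B \<and> k \<in> A \<and> y \<in> B \<and> (\<forall>s\<in>A. \<forall>z\<in>B. (act k y, act s z) \<in> E1)"
      using flow_cont2[OF fl V(1,2)] V(3) by meson
  qed
  then obtain OA OB where O: "\<And>k. open (OA k)" "\<And>k. open (OB k)" "\<And>k. k \<in> OA k" "\<And>k. y \<in> OB k"
    "\<And>k s z. s \<in> OA k \<Longrightarrow> z \<in> OB k \<Longrightarrow> (act k y, act s z) \<in> E1"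
    by metis
  obtain K' where K': "K' \<subseteq> K" "finite K'" "K \<subseteq> (\<Union>k\<in>K'. OA k)"
    using compactE_image[OF K(1), of K OA] O(1,3) by blast
  define W where "W = (\<Inter>k\<in>K'. OB k)"
  have W: "open W" "y \<in> W" unfolding W_def using K'(2) O(2,4) by auto
  then obtain \<tau> where \<tau>: "act \<tau> x \<in> W" using assms(1) unfolding closure_iff_nhds_not_empty by blast
  obtain k where k: "k \<in> K" "act (k + \<tau>) x \<in> U" using K(2)[rule_format, of \<tau>] by blast
  obtain k' where k': "k' \<in> K'" "k \<in> OA k'" using K'(3) k(1) by blast
  have 1: "(x, act k (act \<tau> x)) \<in> E1" using U(3) k(2) flow_add[OF fl] by metis
  have 2: "(act k' y, act k (act \<tau> x)) \<in> E1" using O(5)[OF k'(2)] \<tau> k'(1) W_def by blast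
  have 3: "(act k' y, act k y) \<in> E1" using O(5)[OF k'(2) O(4)] .
  have "(x, act k y) \<in> E" using e1(2) 1 ent_sym[OF e1(1) 2] 3 by meson
  then show ?thesis by blast
qed

lemma equi: "equicontinuous_on act Y"
  unfolding equicontinuous_on_def
proof (intro allI impI, elim conjE)
  fix \<epsilon> :: "('b\<times>'b) set" and z assume e: "entourage \<epsilon>" and z: "z \<in> Y"
  obtain \<delta>2 where d2: "entourage \<delta>2" "\<forall>y1\<in>Y. \<forall>y2\<in>Y. (x,y1) \<in> \<delta>2 \<longrightarrow> (x,y2) \<in> \<delta>2 \<longrightarrow>
            (\<forall>t. (act t y1, act t y2) \<in> \<epsilon>)"
    using step2[OF e] by blast
  obtain \<delta>3 where d3: "entourage \<delta>3" "\<forall>a b c. (a,b) \<in> \<delta>3 \<longrightarrow> (b,c) \<in> \<delta>3 \<longrightarrow> (a,c) \<in> \<delta>2"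
    using ent_split[OF d2(1)] by blast
  obtain \<sigma> where s: "(x, act \<sigma> z) \<in> \<delta>3" using minimal[OF z d3(1)] by blast
  obtain \<delta> where d: "entourage \<delta>" "\<forall>w. (z,w) \<in> \<delta> \<longrightarrow> (act \<sigma> z, act \<sigma> w) \<in> \<delta>3"
    using flow_cont_ent[OF fl d3(1)] by blast
  have "act t w \<in> ent_img \<epsilon> {act t z}" if w: "w \<in> Y" "(z,w) \<in> \<delta>" for t w
  proof -
    have "(act \<sigma> z, act \<sigma> w) \<in> \<delta>3" using d(2) w(2) by blast
    then have a1: "(x, act \<sigma> w) \<in> \<delta>2" using d3(2) s by blast
    have a2: "(x, act \<sigma> z) \<in> \<delta>2" using d3(2) s ent_refl[OF d3(1)] by blast
    have Y1: "act \<sigma> z \<in> Y" by (rule Y_inv[OF z])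
    have Y2: "act \<sigma> w \<in> Y" by (rule Y_inv[OF w(1)])
    have "(act (t - \<sigma>) (act \<sigma> z), act (t - \<sigma>) (act \<sigma> w)) \<in> \<epsilon>"
      using d2(2) Y1 Y2 a2 a1 by blast
    moreover have "act (t - \<sigma>) (act \<sigma> z) = act t z" using flow_add[OF fl, of "t-\<sigma>" \<sigma> z] by simp
    moreover have "act (t - \<sigma>) (act \<sigma> w) = act t w" using flow_add[OF fl, of "t-\<sigma>" \<sigma> w] by simp
    ultimately show ?thesis unfolding ent_img_def by simp
  qed
  then have "\<forall>t. act t ` (ent_img \<delta> {z} \<inter> Y) \<subseteq> ent_img \<epsilon> {act t z}"
    unfolding ent_img_def by auto
  then show "\<exists>\<delta>. entourage \<delta> \<and> (\<forall>t. act t ` (ent_img \<delta> {z} \<inter> Y) \<subseteq> ent_img \<epsilon> {act t z})"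
    using d(1) by blast
qed

lemma discrete: "discrete_ap_on act Y"
  unfolding discrete_ap_on_def
proof (intro allI impI)
  fix \<epsilon> :: "('b\<times>'b) set" assume e: "entourage \<epsilon>"
  obtain \<epsilon>2 where e2: "entourage \<epsilon>2"
    "\<forall>a b c d. (a,b) \<in> \<epsilon>2 \<longrightarrow> (b,c) \<in> \<epsilon>2 \<longrightarrow> (c,d) \<in> \<epsilon>2 \<longrightarrow> (a,d) \<in> \<epsilon>"
    using ent_split3[OF e] by blast
  obtain \<delta>2 where d2: "entourage \<delta>2" "\<forall>y1\<in>Y. \<forall>y2\<in>Y. (x,y1) \<in> \<delta>2 \<longrightarrow> (x,y2) \<in> \<delta>2 \<longrightarrow>
            (\<forall>t. (act t y1, act t y2) \<in> \<epsilon>2)"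
    using step2[OF e2(1)] by blast
  define A where "A = {a. (x, act (-a) x) \<in> \<delta>2}"
  have c1: "(act a (act \<tau> x), act \<tau> x) \<in> \<epsilon>2" if a: "a \<in> A" for a \<tau>
  proof -
    have Y1: "x \<in> Y" using x_in_Y[of 0] flow_zero[OF fl] by simp
    have Y2: "act (-a) x \<in> Y" by (rule x_in_Y)
    have "(x, act (-a) x) \<in> \<delta>2" using a A_def by simp
    then have "(act (\<tau> + a) x, act (\<tau> + a) (act (-a) x)) \<in> \<epsilon>2"
      using d2(2)[rule_format, OF Y1 Y2 ent_refl[OF d2(1)]] by blast
    moreover have "act (\<tau> + a) x = act a (act \<tau> x)"
      using flow_add[OF fl, of a \<tau> x] by (simp add: add.commute)
    moreover have "act (\<tau> + a) (act (-a) x) = act \<tau> x"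
      using flow_add[OF fl, of "\<tau> + a" "-a" x] by simp
    ultimately show ?thesis by simp
  qed
  have c2: "act a y \<in> ent_img \<epsilon> {y}" if y: "y \<in> Y" and a: "a \<in> A" for y a
  proof -
    obtain D where D: "entourage D" "\<forall>z. (y,z) \<in> D \<longrightarrow> (act a y, act a z) \<in> \<epsilon>2"
      using flow_cont_ent[OF fl e2(1)] by blast
    obtain \<tau> where \<tau>: "(y, act \<tau> x) \<in> D \<inter> \<epsilon>2"
      using closure_range_pick[OF y ent_inter[OF D(1) e2(1)]] by blast
    have 1: "(y, act \<tau> x) \<in> \<epsilon>2" using \<tau> by blast
    have 2: "(act \<tau> x, act a (act \<tau> x)) \<in> \<epsilon>2" using ent_sym[OF e2(1) c1[OF a]] .
    have 3: "(act a (act \<tau> x), act a y) \<in> \<epsilon>2" using ent_sym[OF e2(1) D(2)[rule_format, of "act \<tau> x"]] \<tau> by blast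
    have "(y, act a y) \<in> \<epsilon>" using e2(2)[rule_format, OF 1 2 3] .
    then show ?thesis unfolding ent_img_def by simp
  qed
  obtain V where V: "open V" "x \<in> V" "\<forall>z\<in>V. (x,z) \<in> \<delta>2" using ent_nhd[OF d2(1)] by blast
  have a0: "act 0 x \<in> V" using V(2) flow_zero[OF fl] by simp
  obtain W' U' where WU: "open W'" "open U'" "0 \<in> W'" "x \<in> U'" "\<forall>w\<in>W'. \<forall>z\<in>U'. act w z \<in> V"
    using flow_cont2[OF fl V(1) a0] by blast
  have sy: "syndetic {r. act r x \<in> U'}"
    using ap[unfolded ap_point_def, rule_format, OF conjI[OF WU(2) WU(4)]] .
  then obtain K where K: "compact K" "\<forall>t. (\<lambda>k. k + t) ` K \<inter> {r. act r x \<in> U'} \<noteq> {}"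
    unfolding syndetic_def by blast
  define Ob where "Ob f = (\<lambda>k. f - k) -` W'" for f
  have Oo: "open (Ob f)" for f
    unfolding Ob_def by (rule continuous_open_vimage[OF WU(1)]) (intro continuous_intros)
  have "K \<subseteq> (\<Union>f\<in>K. Ob f)" unfolding Ob_def using WU(3) by auto
  then obtain F where F: "F \<subseteq> K" "finite F" "K \<subseteq> (\<Union>f\<in>F. Ob f)"
    using compactE_image[OF K(1), of K Ob] Oo by blast
  have "t \<in> {f + a | f a. f \<in> F \<and> a \<in> A}" for t
  proof -
    obtain k where k: "k \<in> K" "act (k + - t) x \<in> U'" using K(2)[rule_format, of "-t"] by blast
    obtain f where f: "f \<in> F" "f - k \<in> W'" using F(3) k(1) unfolding Ob_def by blast
    have "act (f - k) (act (k + - t) x) \<in> V" using WU(5) f(2) k(2) by blast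
    moreover have "act (f - k) (act (k + - t) x) = act (- (t - f)) x"
    proof -
      have "f - k + (k + - t) = - (t - f)" by (simp add: algebra_simps)
      then show ?thesis using flow_add[OF fl, of "f - k" "k + - t" x] by simp
    qed
    ultimately have "t - f \<in> A" unfolding A_def using V(3) by simp
    moreover have "t = f + (t - f)" by simp
    ultimately show ?thesis using f(1) by blast
  qed
  then have "{f + a | f a. f \<in> F \<and> a \<in> A} = UNIV" by blast
  then show "\<exists>A F. finite F \<and> {f + a | f a. f \<in> F \<and> a \<in> A} = UNIV \<and>
        (\<forall>y\<in>Y. \<forall>a\<in>A. act a y \<in> ent_img \<epsilon> {y})"
    using F(2) c2 by blast
qed

end

theorem theorem2p5:
  fixes act :: "'a::{topological_ab_group_add, t2_space} \<Rightarrow> 'b::{uniform_space, t2_space} \<Rightarrow> 'b"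
    and x :: 'b
  assumes "flow act"
    and "thickly_stable act"
    and "ap_point act x"
  shows "discrete_ap_on act (closure (range (\<lambda>t. act t x)))
       \<and> equicontinuous_on act (closure (range (\<lambda>t. act t x)))"
  using discrete[OF assms] equi[OF assms] by blast

end
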